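(* Let ${\bf x}_0:\mathbb{R}\to\mathbb{R}^m$ be a given continuous bounded leader trajectory, and consider followers $$\dot{\bf x}_i(t)=\sum_{j\in\mathcal{N}_i}{\bf K}_{ji}\big({\bf x}_j(t-T_{ji})-{\bf x}_i(t)\big)+\gamma_i{\bf K}_{0i}\big({\bf x}_0(t-T_{0i})-{\bf x}_i(t)\big),\quad i=1,\dots,n,$$ with the same hypotheses as follows: fixed neighbor sets $\mathcal{N}_i$ among followers; constant symmetric positive definite gains ${\bf K}_{ji}$ and ${\bf K}_{0i}$ (for $\gamma_i=1$); $\gamma_i\in\{0,1\}$ with at least one $\gamma_i=1$; constant delays $T_{ji},T_{0i}\ge0$; the network including the leader is connected; follower links are bidirectional with ${\bf K}_{ji}={\bf K}_{ij}$ or unidirectional in closed rings with identical gains in each ring. Then the follower system is asymptotically contracting regardless of the delays: all its solutions converge asymptotically to a single trajectory, independently of the initial conditions. Moreover, if ${\bf x}_0$ is periodic, all follower states tend to periodic functions with the same period as ${\bf x}_0$.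
   Context: Asymptotically contracting means every virtual displacement between neighboring solutions tends to zero, implying that all solutions converge asymptotically to one another. *)

theory Defs
  imports "HOL-Analysis.Analysis"
begin

text \<open>Followers are indexed by 1..n, the leader by 0.
  N i : neighbour set of follower i (followers j whose state enters follower i's equation);
  K j i : gain matrix of the link j -> i (K 0 i: leader gain of follower i);
  T j i : delay of the link j -> i (T 0 i: leader delay);
  g i  : the coefficient gamma_i in {0,1}.\<close>

definition sym_pos_def_mat :: "real^'m^'m \<Rightarrow> bool" where
  "sym_pos_def_mat A \<longleftrightarrow> transpose A = A \<and> (\<forall>v. v \<noteq> 0 \<longrightarrow> v \<bullet> (A *v v) > 0)"

definition net_edges :: "nat \<Rightarrow> (nat \<Rightarrow> nat set) \<Rightarrow> (nat \<Rightarrow> real) \<Rightarrow> (nat \<times> nat) set" where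
  "net_edges n N g = {(j,i). i \<in> {1..n} \<and> j \<in> N i} \<union> {(0,i) | i. i \<in> {1..n} \<and> g i = 1}"

definition net_connected :: "nat \<Rightarrow> (nat \<Rightarrow> nat set) \<Rightarrow> (nat \<Rightarrow> real) \<Rightarrow> bool" where
  "net_connected n N g \<longleftrightarrow>
     (\<forall>a\<in>{0..n}. \<forall>b\<in>{0..n}. (a,b) \<in> (net_edges n N g \<union> (net_edges n N g)\<inverse>)\<^sup>*)"

definition unidir_link :: "(nat \<Rightarrow> nat set) \<Rightarrow> nat \<Rightarrow> nat \<Rightarrow> bool" where
  "unidir_link N j i \<longleftrightarrow> j \<in> N i \<and> i \<notin> N j"

definition ring_edges :: "nat list \<Rightarrow> (nat \<times> nat) set" where
  "ring_edges r = {(r ! k, r ! ((k + 1) mod length r)) | k. k < length r}"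

definition links_ok :: "nat \<Rightarrow> (nat \<Rightarrow> nat set) \<Rightarrow> (nat \<Rightarrow> nat \<Rightarrow> real^'m^'m) \<Rightarrow> bool" where
  "links_ok n N K \<longleftrightarrow>
     (\<forall>i\<in>{1..n}. \<forall>j\<in>N i. i \<in> N j \<longrightarrow> K j i = K i j) \<and>
     (\<exists>Rs :: nat list list.
        (\<forall>r\<in>set Rs. distinct r \<and> length r \<ge> 2 \<and> set r \<subseteq> {1..n} \<and>
            (\<forall>(j,i)\<in>ring_edges r. unidir_link N j i) \<and>
            (\<exists>A. \<forall>(j,i)\<in>ring_edges r. K j i = A)) \<and>
        (\<forall>i\<in>{1..n}. \<forall>j. unidir_link N j i \<longrightarrow>
            (\<exists>!k. k < length Rs \<and> (j,i) \<in> ring_edges (Rs ! k))))"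

definition follower_rhs ::
  "(nat \<Rightarrow> nat set) \<Rightarrow> (nat \<Rightarrow> nat \<Rightarrow> real^'m^'m) \<Rightarrow> (nat \<Rightarrow> nat \<Rightarrow> real) \<Rightarrow> (nat \<Rightarrow> real)
   \<Rightarrow> (real \<Rightarrow> real^'m) \<Rightarrow> (nat \<Rightarrow> real \<Rightarrow> real^'m) \<Rightarrow> nat \<Rightarrow> real \<Rightarrow> real^'m" where
  "follower_rhs N K T g x0 x i t =
     (\<Sum>j\<in>N i. K j i *v (x j (t - T j i) - x i t))
     + g i *\<^sub>R (K 0 i *v (x0 (t - T 0 i) - x i t))"

text \<open>A solution of the follower system: continuous follower trajectories on the
  real line (values at t \<le> 0 form the continuous initial history) satisfying the
  delay differential equation for all t > 0.\<close>
definition follower_solution ::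
  "nat \<Rightarrow> (nat \<Rightarrow> nat set) \<Rightarrow> (nat \<Rightarrow> nat \<Rightarrow> real^'m^'m) \<Rightarrow> (nat \<Rightarrow> nat \<Rightarrow> real) \<Rightarrow> (nat \<Rightarrow> real)
   \<Rightarrow> (real \<Rightarrow> real^'m) \<Rightarrow> (nat \<Rightarrow> real \<Rightarrow> real^'m) \<Rightarrow> bool" where
  "follower_solution n N K T g x0 x \<longleftrightarrow>
     (\<forall>i\<in>{1..n}. continuous_on UNIV (x i) \<and>
        (\<forall>t>0. (x i has_vector_derivative follower_rhs N K T g x0 x i t) (at t)))"

end

theory Submission
  imports Defs
begin

definition Q :: "real^'m^'m \<Rightarrow> real^'m \<Rightarrow> real" where
  "Q A v = v \<bullet> (A *v v)"

lemma sym_inner: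
  fixes A :: "real^'m^'m"
  assumes "transpose A = A" shows "x \<bullet> (A *v y) = y \<bullet> (A *v x)"
proof -
  have "x \<bullet> (A *v y) = (x v* A) \<bullet> y" by (simp add: dot_lmul_matrix)
  also have "x v* A = A *v x" by (metis assms vector_transpose_matrix)
  finally show ?thesis by (simp add: inner_commute)
qed

lemma Q_diff:
  fixes A :: "real^'m^'m"
  assumes "transpose A = A"
  shows "Q A (a - b) = Q A a - 2 * (a \<bullet> (A *v b)) + Q A b"
  using sym_inner[OF assms, of b a]
  by (simp add: Q_def matrix_vector_mult_diff_distrib inner_diff_left inner_diff_right)

lemma Q_scale: "Q A (c *\<^sub>R v) = c^2 * Q A v"
  by (simp add: Q_def matrix_vector_mult_scaleR power2_eq_square)

lemma cont_Q: "continuous_on S (\<lambda>v. Q A v)"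
  unfolding Q_def
  by (intro continuous_intros linear_continuous_on matrix_vector_mul_bounded_linear)

lemma pd_lower:
  fixes A :: "real^'m^'m"
  assumes "sym_pos_def_mat A"
  shows "\<exists>c>0. \<forall>v. c * (v \<bullet> v) \<le> Q A v"
proof -
  have pos: "v \<noteq> 0 \<Longrightarrow> Q A v > 0" for v using assms by (simp add: sym_pos_def_mat_def Q_def)
  obtain w :: "real^'m" where w: "norm w = 1" using vector_choose_size[of 1] by auto
  have "sphere (0::real^'m) 1 \<noteq> {}" using w by auto
  then obtain v0 where v0: "v0 \<in> sphere 0 1" and min: "\<forall>y\<in>sphere 0 1. Q A v0 \<le> Q A y"
    using continuous_attains_inf[OF compact_sphere _ cont_Q] by blast
  have "v0 \<noteq> 0" using v0 by auto
  hence c: "Q A v0 > 0" using pos by auto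
  have "Q A v0 * (v \<bullet> v) \<le> Q A v" for v
  proof (cases "v = 0")
    case True thus ?thesis by (simp add: Q_def)
  next
    case False
    define u where "u = (1 / norm v) *\<^sub>R v"
    have u: "u \<in> sphere 0 1" using False by (simp add: u_def)
    have v: "v = norm v *\<^sub>R u" using False by (simp add: u_def)
    have "Q A v = (norm v)^2 * Q A u" by (subst v, simp add: Q_scale)
    moreover have "v \<bullet> v = (norm v)^2" by (simp add: power2_norm_eq_inner)
    moreover have "Q A v0 \<le> Q A u" using min u by auto
    ultimately show ?thesis by (metis mult.commute mult_right_mono zero_le_power2)
  qed
  thus ?thesis using c by blast
qed

lemma mat_upper:
  fixes A :: "real^'m^'m"
  shows "\<exists>C>0. \<forall>v. Q A v \<le> C * (v \<bullet> v)"
proof -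
  obtain B where B: "B > 0" "\<And>v. norm (A *v v) \<le> norm v * B"
    using bounded_linear.pos_bounded[OF matrix_vector_mul_bounded_linear[of A]] by blast
  have "Q A v \<le> B * (v \<bullet> v)" for v
  proof -
    have "Q A v \<le> norm v * norm (A *v v)" unfolding Q_def by (rule norm_cauchy_schwarz)
    also have "\<dots> \<le> norm v * (norm v * B)" by (rule mult_left_mono[OF B(2)]) simp
    also have "\<dots> = B * (v \<bullet> v)" by (simp add: power2_norm_eq_inner[symmetric] power2_eq_square)
    finally show ?thesis .
  qed
  thus ?thesis using B by blast
qed

lemma uniform_lower:
  fixes M :: "(real^'m^'m) set"
  assumes "finite M" "\<forall>A\<in>M. sym_pos_def_mat A"
  shows "\<exists>c>0. \<forall>A\<in>M. \<forall>v. c * (v \<bullet> v) \<le> Q A v"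
  using assms
proof (induction M rule: finite_induct)
  case empty thus ?case by (intro exI[of _ 1]) auto
next
  case (insert A M)
  then obtain c1 where c1: "c1 > 0" "\<forall>B\<in>M. \<forall>v. c1 * (v \<bullet> v) \<le> Q B v" by auto
  obtain c2 where c2: "c2 > 0" "\<forall>v. c2 * (v \<bullet> v) \<le> Q A v" using pd_lower[of A] insert.prems by auto
  have "\<forall>B\<in>insert A M. \<forall>v. min c1 c2 * (v \<bullet> v) \<le> Q B v"
  proof (intro ballI allI)
    fix B and v :: "real^'m" assume "B \<in> insert A M"
    have "min c1 c2 * (v \<bullet> v) \<le> c1 * (v \<bullet> v)" "min c1 c2 * (v \<bullet> v) \<le> c2 * (v \<bullet> v)"
      by (auto intro!: mult_right_mono)
    moreover have "c1 * (v \<bullet> v) \<le> Q B v" if "B \<in> M" using c1(2) that by blast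
    moreover have "c2 * (v \<bullet> v) \<le> Q A v" using c2(2) by blast
    ultimately show "min c1 c2 * (v \<bullet> v) \<le> Q B v" using \<open>B \<in> insert A M\<close> by (metis insertE order_trans)
  qed
  thus ?case using c1 c2 by (intro exI[of _ "min c1 c2"]) auto
qed

lemma uniform_upper:
  fixes M :: "(real^'m^'m) set"
  assumes "finite M"
  shows "\<exists>C>0. \<forall>A\<in>M. \<forall>v. Q A v \<le> C * (v \<bullet> v)"
  using assms
proof (induction M rule: finite_induct)
  case empty thus ?case by (intro exI[of _ 1]) auto
next
  case (insert A M)
  then obtain c1 where c1: "c1 > 0" "\<forall>B\<in>M. \<forall>v. Q B v \<le> c1 * (v \<bullet> v)" by auto
  obtain c2 where c2: "c2 > 0" "\<forall>v. Q A v \<le> c2 * (v \<bullet> v)" using mat_upper by auto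
  have "\<forall>B\<in>insert A M. \<forall>v. Q B v \<le> max c1 c2 * (v \<bullet> v)"
  proof (intro ballI allI)
    fix B and v :: "real^'m" assume "B \<in> insert A M"
    have "c1 * (v \<bullet> v) \<le> max c1 c2 * (v \<bullet> v)" "c2 * (v \<bullet> v) \<le> max c1 c2 * (v \<bullet> v)"
      by (auto intro!: mult_right_mono)
    moreover have "Q B v \<le> c1 * (v \<bullet> v)" if "B \<in> M" using c1(2) that by blast
    moreover have "Q A v \<le> c2 * (v \<bullet> v)" using c2(2) by blast
    ultimately show "Q B v \<le> max c1 c2 * (v \<bullet> v)" using \<open>B \<in> insert A M\<close> by (metis insertE order_trans)
  qed
  thus ?case using c1 c2 by (intro exI[of _ "max c1 c2"]) auto
qed

lemma ring_sum_zero: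
  fixes z :: "nat \<Rightarrow> real"
  assumes "distinct r" "length r \<ge> 2"
  shows "(\<Sum>(j,i)\<in>ring_edges r. z j - z i) = 0"
proof -
  let ?l = "length r"
  let ?e = "\<lambda>k. (r ! k, r ! ((k + 1) mod ?l))"
  have re: "ring_edges r = ?e ` {..<?l}" by (auto simp: ring_edges_def)
  have inj: "inj_on ?e {..<?l}"
    using assms(1) by (auto simp: inj_on_def nth_eq_iff_index_eq)
  define G where "G k = z (r ! (k mod ?l))" for k
  have "(\<Sum>(j,i)\<in>ring_edges r. z j - z i) = (\<Sum>k<?l. z (r ! k) - z (r ! ((k + 1) mod ?l)))"
    unfolding re by (subst sum.reindex[OF inj]) auto
  also have "\<dots> = (\<Sum>k<?l. G k - G (Suc k))"
    by (rule sum.cong) (auto simp: G_def)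
  also have "\<dots> = - (\<Sum>k<?l. G (Suc k) - G k)" by (simp add: sum_negf[symmetric])
  also have "\<dots> = 0" using sum_lessThan_telescope[of G ?l] assms by (simp add: G_def)
  finally show ?thesis .
qed

lemma cont_Qc: "continuous_on S f \<Longrightarrow> continuous_on S (\<lambda>s. Q A (f s))"
  using continuous_on_compose2[OF cont_Q[of UNIV A], of S f] by auto

lemma cont_shift:
  fixes f :: "real \<Rightarrow> 'b::topological_space"
  shows "continuous_on UNIV f \<Longrightarrow> continuous_on S (\<lambda>s. f (s - c))"
  by (rule continuous_on_compose2[of UNIV f S "\<lambda>s. s - c"]) (auto intro!: continuous_intros)

lemma inner_self_deriv:
  fixes f :: "real \<Rightarrow> real^'m"
  assumes "(f has_vector_derivative f') (at t)"
  shows "((\<lambda>t. f t \<bullet> f t / 2) has_real_derivative f t \<bullet> f') (at t)"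
proof -
  have "((\<lambda>t. f t \<bullet> f t) has_derivative (\<lambda>h. f t \<bullet> (h *\<^sub>R f') + (h *\<^sub>R f') \<bullet> f t)) (at t)"
    using assms unfolding has_vector_derivative_def by (intro has_derivative_inner)
  hence "((\<lambda>t. f t \<bullet> f t) has_real_derivative 2 * (f t \<bullet> f')) (at t)"
    unfolding has_field_derivative_def
    by (rule has_derivative_eq_rhs) (auto simp: inner_commute algebra_simps)
  hence "((\<lambda>t. f t \<bullet> f t / 2) has_real_derivative 2 * (f t \<bullet> f') / 2) (at t)"
    by (rule DERIV_cdivide)
  thus ?thesis by simp
qed

lemma window_deriv:
  fixes f :: "real \<Rightarrow> real"
  assumes f: "continuous_on UNIV f" and c: "c \<ge> 0"
  shows "((\<lambda>u. integral {u - c..u} f) has_real_derivative f t - f (t - c)) (at t)"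
proof -
  define a where "a = t - c - 1"
  define G where "G u = integral {a..u} f" for u
  have dG: "(G has_real_derivative f x) (at x)" if "x > a" for x
  proof -
    have "(G has_real_derivative f x) (at x within {a..x+1})"
      unfolding G_def by (rule integral_has_real_derivative) (use that continuous_on_subset[OF f] in auto)
    moreover have "at x within {a..x+1} = at x" using that by (intro at_within_Icc_at) auto
    ultimately show ?thesis by simp
  qed
  have d1: "(G has_real_derivative f t) (at t)" using c by (intro dG) (simp add: a_def)
  have d2: "((\<lambda>u. G (u - c)) has_real_derivative f (t - c) * 1) (at t)"
    using c by (intro DERIV_chain2[OF dG]) (auto intro!: derivative_eq_intros simp: a_def)
  have d: "((\<lambda>u. G u - G (u - c)) has_real_derivative f t - f (t - c) * 1) (at t)"
    by (rule DERIV_diff[OF d1 d2])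
  show ?thesis
  proof (rule has_field_derivative_transform_within_open[OF d[simplified], of "{a + c<..}"])
    fix u :: real assume u: "u \<in> {a + c<..}"
    have "integral {a..u} f = integral {a..u - c} f + integral {u - c..u} f"
      using u c by (intro Henstock_Kurzweil_Integration.integral_combine[symmetric] integrable_continuous_real continuous_on_subset[OF f] subset_UNIV) auto
    thus "G u - G (u - c) = integral {u - c..u} f" by (simp add: G_def)
  qed (auto simp: a_def)
qed

lemma int_shift:
  fixes f :: "real \<Rightarrow> real"
  shows "integral {a..b} (\<lambda>t. f (t - c)) = integral {a - c..b - c} f"
proof -
  have "integral {(a - c) - (-c)..(b - c) - (-c)} (\<lambda>x. f (x + -c)) = integral {a - c..b - c} f"
    by (rule integral_shift_real_ivl)
  thus ?thesis by simp
qed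

lemma int_sub:
  fixes f :: "real \<Rightarrow> real"
  assumes "continuous_on UNIV f" "\<And>x. 0 \<le> f x" "c \<le> a" "b \<le> d"
  shows "integral {a..b} f \<le> integral {c..d} f"
proof (rule integral_subset_le)
  show "{a..b} \<subseteq> {c..d}" using assms by auto
qed (use assms in \<open>auto intro!: integrable_continuous_real continuous_on_subset[OF assms(1)]\<close>)

lemma sq_tri:
  fixes a b :: "real^'m"
  shows "b \<bullet> b \<le> 2 * (a \<bullet> a) + 2 * ((a - b) \<bullet> (a - b))"
proof -
  have "0 \<le> (2 *\<^sub>R a - b) \<bullet> (2 *\<^sub>R a - b)" by simp
  thus ?thesis by (simp add: inner_diff_left inner_diff_right inner_commute algebra_simps)
qed

lemma sq_tri2:
  fixes a b :: "real^'m"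
  shows "b \<bullet> b \<le> 2 * (a \<bullet> a) + 2 * ((b - a) \<bullet> (b - a))"
proof -
  have "(b - a) \<bullet> (b - a) = (a - b) \<bullet> (a - b)"
    by (simp add: inner_diff_left inner_diff_right inner_commute)
  thus ?thesis using sq_tri[of b a] by simp
qed

lemma finite_ex_bound:
  fixes P :: "nat \<Rightarrow> nat \<Rightarrow> bool"
  assumes "finite A" "\<forall>k\<in>A. \<exists>r. P r k" "\<And>r r' k. P r k \<Longrightarrow> r \<le> r' \<Longrightarrow> P r' k"
  shows "\<exists>R. \<forall>k\<in>A. P R k"
  using assms(1,2)
proof (induction A rule: finite_induct)
  case empty thus ?case by auto
next
  case (insert a A)
  then obtain R where R: "\<forall>k\<in>A. P R k" by auto
  obtain r where r: "P r a" using insert.prems by auto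
  have "\<forall>k\<in>insert a A. P (max R r) k"
    using R r assms(3) by (metis insertE max.cobounded1 max.cobounded2)
  thus ?case by blast
qed

lemma powr_tendsto0:
  fixes \<rho> C :: real
  assumes "0 < \<rho>" "\<rho> < 1"
  shows "((\<lambda>t. C * \<rho> powr t) \<longlongrightarrow> 0) at_top"
proof -
  have "ln \<rho> < 0" using assms by simp
  hence "((\<lambda>t. exp t powr ln \<rho>) \<longlongrightarrow> 0) at_top" by (intro tendsto_neg_powr exp_at_top)
  moreover have "exp t powr ln \<rho> = \<rho> powr t" for t using assms by (simp add: powr_def mult.commute)
  ultimately have "((\<lambda>t. \<rho> powr t) \<longlongrightarrow> 0) at_top" by simp
  from tendsto_mult[OF tendsto_const this, of C] show ?thesis by simp
qed

locale netw =
  fixes n :: nat and N :: "nat \<Rightarrow> nat set" and K :: "nat \<Rightarrow> nat \<Rightarrow> real^'m^'m"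
    and T :: "nat \<Rightarrow> nat \<Rightarrow> real" and g :: "nat \<Rightarrow> real"
  assumes N_sub: "\<forall>i\<in>{1..n}. N i \<subseteq> {1..n} - {i}"
    and K_pd: "\<forall>i\<in>{1..n}. \<forall>j\<in>N i. sym_pos_def_mat (K j i)"
    and K0_pd: "\<forall>i\<in>{1..n}. g i = 1 \<longrightarrow> sym_pos_def_mat (K 0 i)"
    and g01: "\<forall>i\<in>{1..n}. g i \<in> {0, 1}"
    and T_nonneg: "\<forall>i\<in>{1..n}. (\<forall>j\<in>N i. T j i \<ge> 0) \<and> T 0 i \<ge> 0"
    and conn: "net_connected n N g"
    and links: "links_ok n N K"
begin

lemma finN: "i \<in> {1..n} \<Longrightarrow> finite (N i)"
proof -
  assume "i \<in> {1..n}"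
  hence "N i \<subseteq> {1..n}" using N_sub by blast
  thus ?thesis using finite_subset by blast
qed

lemma N_mem: "i \<in> {1..n} \<Longrightarrow> j \<in> N i \<Longrightarrow> j \<in> {1..n} \<and> j \<noteq> i"
  using N_sub by blast

lemma cancel:
  fixes z :: "nat \<Rightarrow> real^'m"
  shows "(\<Sum>i\<in>{1..n}. \<Sum>j\<in>N i. Q (K j i) (z j) - Q (K j i) (z i)) = 0"
proof -
  define F where "F j i = Q (K j i) (z j) - Q (K j i) (z i)" for j i
  define D where "D = (\<lambda>(i,j). (j,i)) ` Sigma {1..n} N"
  have Dmem: "(j,i) \<in> D \<longleftrightarrow> i \<in> {1..n} \<and> j \<in> N i" for i j by (auto simp: D_def)
  have finD: "finite D" unfolding D_def using finN by (intro finite_imageI finite_SigmaI) auto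
  have "(\<Sum>i\<in>{1..n}. \<Sum>j\<in>N i. F j i) = (\<Sum>(i,j)\<in>Sigma {1..n} N. F j i)"
    using finN by (subst sum.Sigma) auto
  also have "\<dots> = (\<Sum>(j,i)\<in>D. F j i)"
    unfolding D_def by (subst sum.reindex) (auto simp: inj_on_def intro!: sum.cong split: prod.splits)
  finally have eq1: "(\<Sum>i\<in>{1..n}. \<Sum>j\<in>N i. F j i) = (\<Sum>(j,i)\<in>D. F j i)" .
  define Bi where "Bi = {(j,i). (j,i) \<in> D \<and> (i,j) \<in> D}"
  define Uni where "Uni = {(j,i). (j,i) \<in> D \<and> (i,j) \<notin> D}"
  have DU: "D = Bi \<union> Uni" "Bi \<inter> Uni = {}" by (auto simp: Bi_def Uni_def)
  have finB: "finite Bi" "finite Uni" using finD DU by auto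
  have "(\<Sum>(j,i)\<in>Bi. F j i) = (\<Sum>(j,i)\<in>Bi. F i j)"
    by (rule sum.reindex_bij_witness[where i=prod.swap and j=prod.swap]) (auto simp: Bi_def)
  also have "\<dots> = (\<Sum>(j,i)\<in>Bi. - F j i)"
  proof (rule sum.cong)
    fix x assume "x \<in> Bi"
    then obtain j i where x: "x = (j,i)" "(j,i) \<in> D" "(i,j) \<in> D" by (auto simp: Bi_def)
    hence "K j i = K i j" using links unfolding links_ok_def by (auto simp: Dmem)
    thus "(case x of (j,i) \<Rightarrow> F i j) = (case x of (j,i) \<Rightarrow> - F j i)" by (simp add: x F_def)
  qed simp
  also have "\<dots> = - (\<Sum>(j,i)\<in>Bi. F j i)" by (simp add: sum_negf[symmetric] case_prod_unfold)
  finally have SB: "(\<Sum>(j,i)\<in>Bi. F j i) = 0" by simp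
  obtain Rs :: "nat list list" where
    R1: "\<forall>r\<in>set Rs. distinct r \<and> length r \<ge> 2 \<and> set r \<subseteq> {1..n} \<and>
            (\<forall>(j,i)\<in>ring_edges r. unidir_link N j i) \<and>
            (\<exists>A. \<forall>(j,i)\<in>ring_edges r. K j i = A)" and
    R2: "\<forall>i\<in>{1..n}. \<forall>j. unidir_link N j i \<longrightarrow>
            (\<exists>!k. k < length Rs \<and> (j,i) \<in> ring_edges (Rs ! k))"
    using links unfolding links_ok_def by blast
  have UnEq: "Uni = (\<Union>k\<in>{..<length Rs}. ring_edges (Rs ! k))"
  proof
    show "Uni \<subseteq> (\<Union>k\<in>{..<length Rs}. ring_edges (Rs ! k))"
    proof
      fix x assume "x \<in> Uni"
      then obtain j i where x: "x = (j,i)" "(j,i) \<in> D" "(i,j) \<notin> D" by (auto simp: Uni_def)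
      have "i \<in> {1..n}" "j \<in> N i" using x(2) by (auto simp: Dmem)
      hence "j \<in> {1..n}" using N_mem by blast
      hence "unidir_link N j i" "i \<in> {1..n}" using x by (auto simp: Dmem unidir_link_def)
      thus "x \<in> (\<Union>k\<in>{..<length Rs}. ring_edges (Rs ! k))" using R2 x by blast
    qed
  next
    show "(\<Union>k\<in>{..<length Rs}. ring_edges (Rs ! k)) \<subseteq> Uni"
    proof
      fix x assume "x \<in> (\<Union>k\<in>{..<length Rs}. ring_edges (Rs ! k))"
      then obtain k where k: "k < length Rs" "x \<in> ring_edges (Rs ! k)" by auto
      let ?r = "Rs ! k"
      have r: "?r \<in> set Rs" using k by auto
      obtain q where q: "q < length ?r" "x = (?r ! q, ?r ! ((q + 1) mod length ?r))"
        using k(2) by (auto simp: ring_edges_def)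
      have "unidir_link N (?r ! q) (?r ! ((q + 1) mod length ?r))"
        using R1 r k(2) q by fastforce
      moreover have "?r ! ((q + 1) mod length ?r) \<in> set ?r"
        using q(1) by (intro nth_mem mod_less_divisor) linarith
      moreover have "set ?r \<subseteq> {1..n}" using R1 r by blast
      ultimately have "unidir_link N (?r ! q) (?r ! ((q + 1) mod length ?r))" 
        "?r ! ((q + 1) mod length ?r) \<in> {1..n}" by auto
      thus "x \<in> Uni" using q by (auto simp: Uni_def Dmem unidir_link_def)
    qed
  qed
  have "(\<Sum>(j,i)\<in>Uni. F j i) = (\<Sum>k<length Rs. \<Sum>(j,i)\<in>ring_edges (Rs ! k). F j i)"
    unfolding UnEq
  proof (rule sum.UNION_disjoint)
    show "\<forall>k\<in>{..<length Rs}. finite (ring_edges (Rs ! k))"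
      by (auto simp: ring_edges_def)
    show "\<forall>k\<in>{..<length Rs}. \<forall>k'\<in>{..<length Rs}. k \<noteq> k' \<longrightarrow>
            ring_edges (Rs ! k) \<inter> ring_edges (Rs ! k') = {}"
    proof (intro ballI impI)
      fix k k' assume kk: "k \<in> {..<length Rs}" "k' \<in> {..<length Rs}" "k \<noteq> k'"
      show "ring_edges (Rs ! k) \<inter> ring_edges (Rs ! k') = {}"
      proof (rule ccontr)
        assume "ring_edges (Rs ! k) \<inter> ring_edges (Rs ! k') \<noteq> {}"
        then obtain j i where ji: "(j,i) \<in> ring_edges (Rs ! k)" "(j,i) \<in> ring_edges (Rs ! k')" by auto
        have x: "(j,i) \<in> Uni" using ji kk UnEq by blast
        then have "(j,i) \<in> D" "(i,j) \<notin> D" by (auto simp: Uni_def)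
        moreover have "i \<in> {1..n}" "j \<in> N i" using \<open>(j,i) \<in> D\<close> by (auto simp: Dmem)
        moreover hence "j \<in> {1..n}" using N_mem by blast
        ultimately have "unidir_link N j i" "i \<in> {1..n}" by (auto simp: Dmem unidir_link_def)
        thus False using R2 ji kk by blast
      qed
    qed
  qed simp
  also have "\<dots> = 0"
  proof (rule sum.neutral, rule ballI)
    fix k assume "k \<in> {..<length Rs}"
    hence r: "Rs ! k \<in> set Rs" by auto
    then obtain A where A: "\<forall>(j,i)\<in>ring_edges (Rs ! k). K j i = A" using R1 by blast
    have "(\<Sum>(j,i)\<in>ring_edges (Rs ! k). F j i) = (\<Sum>(j,i)\<in>ring_edges (Rs ! k). Q A (z j) - Q A (z i))"
      by (rule sum.cong) (use A in \<open>auto simp: F_def\<close>)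
    also have "\<dots> = 0" using ring_sum_zero[of "Rs ! k" "\<lambda>v. Q A (z v)"] R1 r by auto
    finally show "(\<Sum>(j,i)\<in>ring_edges (Rs ! k). F j i) = 0" .
  qed
  finally have SU: "(\<Sum>(j,i)\<in>Uni. F j i) = 0" .
  have "(\<Sum>(j,i)\<in>D. F j i) = (\<Sum>(j,i)\<in>Bi. F j i) + (\<Sum>(j,i)\<in>Uni. F j i)"
    unfolding DU(1) by (rule sum.union_disjoint) (use finB DU in auto)
  thus ?thesis using eq1 SB SU by (simp add: F_def)
qed

definition hrhs :: "(nat \<Rightarrow> real \<Rightarrow> real^'m) \<Rightarrow> nat \<Rightarrow> real \<Rightarrow> real^'m" where
  "hrhs e i t = (\<Sum>j\<in>N i. K j i *v (e j (t - T j i) - e i t)) - g i *\<^sub>R (K 0 i *v e i t)"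

definition hsol :: "(nat \<Rightarrow> real \<Rightarrow> real^'m) \<Rightarrow> bool" where
  "hsol e \<longleftrightarrow> (\<forall>i\<in>{1..n}. continuous_on UNIV (e i) \<and>
      (\<forall>t>0. (e i has_vector_derivative hrhs e i t) (at t)))"

definition V :: "(nat \<Rightarrow> real \<Rightarrow> real^'m) \<Rightarrow> real \<Rightarrow> real" where
  "V e t = (\<Sum>i\<in>{1..n}. e i t \<bullet> e i t / 2)
     + (\<Sum>i\<in>{1..n}. \<Sum>j\<in>N i. integral {t - T j i..t} (\<lambda>s. Q (K j i) (e j s)) / 2)"

definition W :: "(nat \<Rightarrow> real \<Rightarrow> real^'m) \<Rightarrow> real \<Rightarrow> real" where
  "W e t = (\<Sum>i\<in>{1..n}. \<Sum>j\<in>N i. Q (K j i) (e i t - e j (t - T j i)) / 2)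
     + (\<Sum>i\<in>{1..n}. g i * Q (K 0 i) (e i t))"

lemma Ksym: "i \<in> {1..n} \<Longrightarrow> j \<in> N i \<Longrightarrow> transpose (K j i) = K j i"
  using K_pd by (auto simp: sym_pos_def_mat_def)

lemma Tnn: "i \<in> {1..n} \<Longrightarrow> j \<in> N i \<Longrightarrow> T j i \<ge> 0"
  using T_nonneg by auto

lemma edge_identity:
  fixes a b c :: "real^'m" and A :: "real^'m^'m"
  assumes "transpose A = A"
  shows "a \<bullet> (A *v (b - a)) + (Q A c - Q A b) / 2 = (Q A c - Q A a) / 2 - Q A (a - b) / 2"
proof -
  have h1: "a \<bullet> (A *v (b - a)) = a \<bullet> (A *v b) - Q A a"
    by (simp add: Q_def matrix_vector_mult_diff_distrib inner_diff_right)
  show ?thesis unfolding h1 Q_diff[OF assms, of a b] by (simp add: field_simps)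
qed

lemma V_deriv:
  assumes e: "hsol e" and t: "t > 0"
  shows "(V e has_real_derivative - W e t) (at t)"
proof -
  have cont: "continuous_on UNIV (e i)" if "i \<in> {1..n}" for i using e that by (auto simp: hsol_def)
  have der: "(e i has_vector_derivative hrhs e i t) (at t)" if "i \<in> {1..n}" for i
    using e that t by (auto simp: hsol_def)
  define D where "D = (\<Sum>i\<in>{1..n}. e i t \<bullet> hrhs e i t)
     + (\<Sum>i\<in>{1..n}. \<Sum>j\<in>N i. (Q (K j i) (e j t) - Q (K j i) (e j (t - T j i))) / 2)"
  have "(V e has_real_derivative D) (at t)"
    unfolding V_def[abs_def] D_def
  proof (intro DERIV_add DERIV_sum)
    fix i assume i: "i \<in> {1..n}"
    show "((\<lambda>x. e i x \<bullet> e i x / 2) has_real_derivative e i t \<bullet> hrhs e i t) (at t)"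
      by (rule inner_self_deriv[OF der[OF i]])
    fix j assume j: "j \<in> N i"
    have cj: "continuous_on UNIV (e j)" using cont N_mem i j by blast
    have "((\<lambda>x. integral {x - T j i..x} (\<lambda>s. Q (K j i) (e j s))) has_real_derivative
        Q (K j i) (e j t) - Q (K j i) (e j (t - T j i))) (at t)"
      by (rule window_deriv[OF cont_Qc[OF cj] Tnn[OF i j]])
    thus "((\<lambda>x. integral {x - T j i..x} (\<lambda>s. Q (K j i) (e j s)) / 2) has_real_derivative
        (Q (K j i) (e j t) - Q (K j i) (e j (t - T j i))) / 2) (at t)"
      by (rule DERIV_cdivide)
  qed
  moreover have "D = - W e t"
  proof -
    have "D = (\<Sum>i\<in>{1..n}. (\<Sum>j\<in>N i. e i t \<bullet> (K j i *v (e j (t - T j i) - e i t))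
                 + (Q (K j i) (e j t) - Q (K j i) (e j (t - T j i))) / 2) - g i * Q (K 0 i) (e i t))"
      unfolding D_def sum.distrib[symmetric]
      by (rule sum.cong) (auto simp: hrhs_def inner_diff_right inner_sum_right sum.distrib Q_def)
    also have "\<dots> = (\<Sum>i\<in>{1..n}. (\<Sum>j\<in>N i. (Q (K j i) (e j t) - Q (K j i) (e i t)) / 2
                 - Q (K j i) (e i t - e j (t - T j i)) / 2) - g i * Q (K 0 i) (e i t))"
      by (intro sum.cong refl arg_cong2[where f="(-)"] edge_identity Ksym) auto
    also have "\<dots> = - W e t + (\<Sum>i\<in>{1..n}. \<Sum>j\<in>N i. (Q (K j i) (e j t) - Q (K j i) (e i t)) / 2)"
      by (simp add: W_def sum.distrib sum_subtractf sum_negf)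
    also have "(\<Sum>i\<in>{1..n}. \<Sum>j\<in>N i. (Q (K j i) (e j t) - Q (K j i) (e i t)) / 2)
       = (\<Sum>i\<in>{1..n}. \<Sum>j\<in>N i. Q (K j i) (e j t) - Q (K j i) (e i t)) / 2"
      by (simp add: sum_divide_distrib)
    finally show ?thesis using cancel[of "\<lambda>j. e j t"] by simp
  qed
  ultimately show ?thesis by simp
qed

lemma Q_nonneg: "sym_pos_def_mat A \<Longrightarrow> Q A v \<ge> 0"
  by (cases "v = 0") (auto simp: Q_def sym_pos_def_mat_def less_imp_le)

lemma Qe_nonneg: "i \<in> {1..n} \<Longrightarrow> j \<in> N i \<Longrightarrow> Q (K j i) v \<ge> 0"
  using K_pd Q_nonneg by blast

lemma Q0_nonneg: "i \<in> {1..n} \<Longrightarrow> g i * Q (K 0 i) v \<ge> 0"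
  using g01 K0_pd Q_nonneg by fastforce

lemma W_nonneg: "W e t \<ge> 0"
  unfolding W_def
  by (intro add_nonneg_nonneg sum_nonneg divide_nonneg_pos Qe_nonneg Q0_nonneg) auto

lemma hsol_cont: "hsol e \<Longrightarrow> i \<in> {1..n} \<Longrightarrow> continuous_on S (e i)"
  using continuous_on_subset[of UNIV "e i" S] by (auto simp: hsol_def)

lemma V_cont: assumes e: "hsol e" shows "continuous_on S (V e)"
proof -
  have cw: "continuous_on S (\<lambda>u. integral {u - T j i..u} (\<lambda>s. Q (K j i) (e j s)))"
    if i: "i \<in> {1..n}" and j: "j \<in> N i" for i j
  proof (rule continuous_at_imp_continuous_on, rule ballI)
    fix x
    have cj: "continuous_on UNIV (e j)" using hsol_cont[OF e] N_mem i j by blast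
    show "isCont (\<lambda>u. integral {u - T j i..u} (\<lambda>s. Q (K j i) (e j s))) x"
      by (rule DERIV_isCont[OF window_deriv[OF cont_Qc[OF cj] Tnn[OF i j]]])
  qed
  show ?thesis
    unfolding V_def[abs_def]
    by (intro continuous_intros cw hsol_cont[OF e]) auto
qed

lemma V_int:
  assumes e: "hsol e" and ab: "0 \<le> a" "a \<le> b"
  shows "(W e has_integral V e a - V e b) {a..b}"
proof -
  have "((\<lambda>t. - W e t) has_integral V e b - V e a) {a..b}"
  proof (rule fundamental_theorem_of_calculus_interior[OF ab(2) V_cont[OF e]])
    fix x assume "x \<in> {a<..<b}"
    hence "x > 0" using ab by auto
    thus "(V e has_vector_derivative - W e x) (at x)"
      using V_deriv[OF e] by (simp add: has_real_derivative_iff_has_vector_derivative)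
  qed
  from has_integral_neg[OF this] show ?thesis by simp
qed

lemma V_mono: assumes "hsol e" "0 \<le> a" "a \<le> b" shows "V e b \<le> V e a"
proof -
  have "0 \<le> V e a - V e b"
    by (rule has_integral_nonneg[OF V_int[OF assms]]) (rule W_nonneg)
  thus ?thesis by simp
qed

lemma window_nonneg:
  assumes "hsol e" "i \<in> {1..n}" "j \<in> N i"
  shows "integral {t - T j i..t} (\<lambda>s. Q (K j i) (e j s)) \<ge> 0"
proof -
  have "continuous_on {t - T j i..t} (e j)" using hsol_cont[OF assms(1)] N_mem assms(2,3) by blast
  hence "(\<lambda>s. Q (K j i) (e j s)) integrable_on {t - T j i..t}"
    by (intro integrable_continuous_real cont_Qc)
  thus ?thesis
    by (rule integral_nonneg) (rule Qe_nonneg[OF assms(2,3)])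
qed

lemma V_lower:
  assumes e: "hsol e" and i: "i \<in> {1..n}"
  shows "e i t \<bullet> e i t / 2 \<le> V e t"
proof -
  have "e i t \<bullet> e i t / 2 \<le> (\<Sum>i\<in>{1..n}. e i t \<bullet> e i t / 2)"
    using i by (intro member_le_sum) auto
  moreover have "0 \<le> (\<Sum>i\<in>{1..n}. \<Sum>j\<in>N i. integral {t - T j i..t} (\<lambda>s. Q (K j i) (e j s)) / 2)"
    by (intro sum_nonneg divide_nonneg_pos window_nonneg[OF e]) auto
  ultimately show ?thesis unfolding V_def by linarith
qed

definition UE :: "(nat \<times> nat) set" where
  "UE = net_edges n N g \<union> (net_edges n N g)\<inverse>"

primrec reach :: "nat \<Rightarrow> nat set" where
  "reach 0 = {0}"
| "reach (Suc r) = reach r \<union> {b. \<exists>a\<in>reach r. (a, b) \<in> UE}"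

lemma reach_mono: "r \<le> r' \<Longrightarrow> reach r \<subseteq> reach r'"
  by (induction r' rule: dec_induct) auto

lemma reach_all: "\<exists>R. {1..n} \<subseteq> reach R"
proof -
  have "\<exists>r. k \<in> reach r" if "(0, k) \<in> UE\<^sup>*" for k
    using that
  proof (induction k rule: rtrancl_induct)
    case base thus ?case by (intro exI[of _ 0]) auto
  next
    case (step b c)
    then obtain r where "b \<in> reach r" by auto
    hence "c \<in> reach (Suc r)" using step by auto
    thus ?case by blast
  qed
  moreover have "(0, k) \<in> UE\<^sup>*" if "k \<in> {1..n}" for k
    using conn that unfolding net_connected_def UE_def by auto
  ultimately have "\<forall>k\<in>{1..n}. \<exists>r. k \<in> reach r" by blast
  then obtain R where "\<forall>k\<in>{1..n}. k \<in> reach R"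
    using finite_ex_bound[of "{1..n}" "\<lambda>r k. k \<in> reach r"] reach_mono by blast
  thus ?thesis by blast
qed

definition hmax :: real where
  "hmax = Max (insert 0 ((\<lambda>(i,j). T j i) ` Sigma {1..n} N))"

lemma hmax: "hmax \<ge> 0" "i \<in> {1..n} \<Longrightarrow> j \<in> N i \<Longrightarrow> T j i \<le> hmax"
proof -
  have fin: "finite (insert 0 ((\<lambda>(i,j). T j i) ` Sigma {1..n} N))"
    using finN by (intro finite_insert[THEN iffD2] finite_imageI finite_SigmaI) auto
  show "hmax \<ge> 0" unfolding hmax_def using fin by (intro Max_ge) auto
  show "i \<in> {1..n} \<Longrightarrow> j \<in> N i \<Longrightarrow> T j i \<le> hmax" unfolding hmax_def using fin
    by (intro Max_ge) force+
qed

lemma kappa: "\<exists>\<kappa>>0. (\<forall>i\<in>{1..n}. \<forall>j\<in>N i. \<forall>v. \<kappa> * (v \<bullet> v) \<le> Q (K j i) v)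
   \<and> (\<forall>i\<in>{1..n}. g i = 1 \<longrightarrow> (\<forall>v. \<kappa> * (v \<bullet> v) \<le> Q (K 0 i) v))"
proof -
  define M where "M = ((\<lambda>(i,j). K j i) ` Sigma {1..n} N) \<union> ((\<lambda>i. K 0 i) ` {i\<in>{1..n}. g i = 1})"
  have "finite M" unfolding M_def using finN by (intro finite_UnI finite_imageI finite_SigmaI) auto
  moreover have "\<forall>A\<in>M. sym_pos_def_mat A" unfolding M_def using K_pd K0_pd by auto
  ultimately obtain c where c: "c > 0" "\<forall>A\<in>M. \<forall>v. c * (v \<bullet> v) \<le> Q A v"
    using uniform_lower by blast
  have "K j i \<in> M" if "i \<in> {1..n}" "j \<in> N i" for i j unfolding M_def using that by force
  moreover have "K 0 i \<in> M" if "i \<in> {1..n}" "g i = 1" for i unfolding M_def using that by force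
  ultimately show ?thesis using c by (intro exI[of _ c]) auto
qed

lemma lambda: "\<exists>\<Lambda>>0. \<forall>i\<in>{1..n}. \<forall>j\<in>N i. \<forall>v. Q (K j i) v \<le> \<Lambda> * (v \<bullet> v)"
proof -
  define M where "M = ((\<lambda>(i,j). K j i) ` Sigma {1..n} N)"
  have "finite M" unfolding M_def using finN by (intro finite_imageI finite_SigmaI) auto
  then obtain c where c: "c > 0" "\<forall>A\<in>M. \<forall>v. Q A v \<le> c * (v \<bullet> v)"
    using uniform_upper by blast
  have "K j i \<in> M" if "i \<in> {1..n}" "j \<in> N i" for i j unfolding M_def using that by force
  thus ?thesis using c by (intro exI[of _ c]) auto
qed

context
  fixes e :: "nat \<Rightarrow> real \<Rightarrow> real^'m"
  assumes e: "hsol e"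
begin

lemma c_sq: "k \<in> {1..n} \<Longrightarrow> continuous_on S (\<lambda>t. e k t \<bullet> e k t)"
  by (intro continuous_intros hsol_cont[OF e])

lemma c_sq_shift: "k \<in> {1..n} \<Longrightarrow> continuous_on S (\<lambda>t. e k (t - c) \<bullet> e k (t - c))"
  using cont_shift[OF hsol_cont[OF e, of k UNIV], of S c] by (intro continuous_intros) auto

lemma c_sqd: "i \<in> {1..n} \<Longrightarrow> j \<in> {1..n} \<Longrightarrow>
   continuous_on S (\<lambda>t. (e i t - e j (t - c)) \<bullet> (e i t - e j (t - c)))"
  using cont_shift[OF hsol_cont[OF e, of j UNIV], of S c] hsol_cont[OF e, of i S]
  by (intro continuous_intros) auto

lemma V_nonneg: "0 \<le> V e t"
proof -
  have "0 \<le> (\<Sum>i\<in>{1..n}. e i t \<bullet> e i t / 2)" by (intro sum_nonneg) auto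
  moreover have "0 \<le> (\<Sum>i\<in>{1..n}. \<Sum>j\<in>N i. integral {t - T j i..t} (\<lambda>s. Q (K j i) (e j s)) / 2)"
    by (intro sum_nonneg divide_nonneg_pos window_nonneg[OF e]) auto
  ultimately show ?thesis unfolding V_def by linarith
qed

lemma decay: "\<exists>\<theta> L. 0 < \<theta> \<and> \<theta> < 1 \<and> L > 0 \<and> (\<forall>t0\<ge>0. V e (t0 + L) \<le> \<theta> * V e t0)"
proof -
  obtain \<kappa> where \<kappa>: "\<kappa> > 0" "\<And>i j v. i \<in> {1..n} \<Longrightarrow> j \<in> N i \<Longrightarrow> \<kappa> * (v \<bullet> v) \<le> Q (K j i) v"
    "\<And>i v. i \<in> {1..n} \<Longrightarrow> g i = 1 \<Longrightarrow> \<kappa> * (v \<bullet> v) \<le> Q (K 0 i) v"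
    using kappa by blast
  obtain \<Lambda> where \<Lambda>: "\<Lambda> > 0" "\<And>i j v. i \<in> {1..n} \<Longrightarrow> j \<in> N i \<Longrightarrow> Q (K j i) v \<le> \<Lambda> * (v \<bullet> v)"
    using lambda by blast
  obtain R where R: "{1..n} \<subseteq> reach R" using reach_all by blast
  define h where "h = hmax"
  have h: "h \<ge> 0" "\<And>i j. i \<in> {1..n} \<Longrightarrow> j \<in> N i \<Longrightarrow> T j i \<le> h"
    using hmax by (auto simp: h_def)
  define B where "B r = 4 / \<kappa> * 3 ^ r" for r :: nat
  have Bpos: "B r > 0" for r using \<kappa> by (simp add: B_def)
  have Bstep: "2 * B r + 4 / \<kappa> \<le> B (Suc r)" for r
  proof -
    have "(1::real) \<le> 3 ^ r" by simp
    hence "4 / \<kappa> * 1 \<le> 4 / \<kappa> * 3 ^ r" using \<kappa> by (intro mult_left_mono) auto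
    thus ?thesis by (simp add: B_def)
  qed
  have k4: "0 < 4 / \<kappa>" using \<kappa> by simp
  have Bmono: "B r \<le> B (Suc r)" for r using Bstep[of r] Bpos[of r] k4 by linarith
  define L where "L = 2 * real R * h + h + 1"
  have Rh: "0 \<le> real R * h" using h by simp
  have Rh2: "0 \<le> 2 * real R * h" using h by simp
  have L: "L > 0" unfolding L_def using h Rh2 by linarith
  define D where "D = real n * B R / 2 + (\<Sum>i\<in>{1..n}. \<Sum>j\<in>N i. \<Lambda> * B R / 2)"
  have BR: "0 \<le> B R" using Bpos[of R] by simp
  have D: "D \<ge> 0" unfolding D_def using BR \<Lambda>(1)
    by (intro add_nonneg_nonneg sum_nonneg) (auto intro!: divide_nonneg_pos mult_nonneg_nonneg)
  define \<theta> where "\<theta> = (D + 1) / (D + 2)"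
  have \<theta>: "0 < \<theta>" "\<theta> < 1" using D by (auto simp: \<theta>_def)
  have main: "V e (t0 + L) \<le> \<theta> * V e t0" if t0: "t0 \<ge> 0" for t0
  proof -
    define J where "J = V e t0 - V e (t0 + L)"
    have Wint: "(W e has_integral J) {t0..t0 + L}" unfolding J_def using V_int[OF e t0] L by simp
    have J: "J \<ge> 0" by (rule has_integral_nonneg[OF Wint W_nonneg])
    have wi: "W e integrable_on {t0..t0 + L}" by (rule has_integral_integrable[OF Wint])
    have WJ: "integral {t0..t0 + L} (W e) = J" by (rule integral_unique[OF Wint])
    have wint: "W e integrable_on {\<alpha>..\<beta>}" if "t0 \<le> \<alpha>" "\<beta> \<le> t0 + L" for \<alpha> \<beta>
      by (rule integrable_subinterval_real[OF wi]) (use that in auto)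
    have Wsub: "integral {\<alpha>..\<beta>} (W e) \<le> J" if "t0 \<le> \<alpha>" "\<beta> \<le> t0 + L" for \<alpha> \<beta>
    proof -
      have "integral {\<alpha>..\<beta>} (W e) \<le> integral {t0..t0 + L} (W e)"
        by (rule integral_subset_le[OF _ wint[OF that] wi]) (use that W_nonneg in auto)
      thus ?thesis unfolding WJ .
    qed
    have F1: "integral {\<alpha>..\<beta>} (\<lambda>t. (e i t - e j (t - T j i)) \<bullet> (e i t - e j (t - T j i))) \<le> 2 / \<kappa> * J"
      if i: "i \<in> {1..n}" and j: "j \<in> N i" and ab: "t0 \<le> \<alpha>" "\<beta> \<le> t0 + L" for i j \<alpha> \<beta>
    proof -
      have jn: "j \<in> {1..n}" using N_mem i j by blast
      have pw: "\<kappa> / 2 * ((e i t - e j (t - T j i)) \<bullet> (e i t - e j (t - T j i))) \<le> W e t" for t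
      proof -
        have "\<kappa> / 2 * ((e i t - e j (t - T j i)) \<bullet> (e i t - e j (t - T j i)))
            \<le> Q (K j i) (e i t - e j (t - T j i)) / 2" using \<kappa>(2)[OF i j] by simp
        also have "\<dots> \<le> (\<Sum>j\<in>N i. Q (K j i) (e i t - e j (t - T j i)) / 2)"
          using j finN[OF i] by (intro member_le_sum Qe_nonneg[OF i] divide_nonneg_pos) auto
        also have "\<dots> \<le> (\<Sum>i\<in>{1..n}. \<Sum>j\<in>N i. Q (K j i) (e i t - e j (t - T j i)) / 2)"
          using i by (intro member_le_sum sum_nonneg divide_nonneg_pos Qe_nonneg) auto
        also have "\<dots> \<le> W e t"
        proof -
          have "0 \<le> (\<Sum>i\<in>{1..n}. g i * Q (K 0 i) (e i t))" by (intro sum_nonneg Q0_nonneg) auto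
          thus ?thesis unfolding W_def by linarith
        qed
        finally show ?thesis .
      qed
      have "integral {\<alpha>..\<beta>} (\<lambda>t. \<kappa> / 2 * ((e i t - e j (t - T j i)) \<bullet> (e i t - e j (t - T j i))))
          \<le> integral {\<alpha>..\<beta>} (W e)"
        using ab by (intro integral_le wint pw integrable_continuous_real continuous_intros c_sqd i jn) auto
      also have "\<dots> \<le> J" by (rule Wsub[OF ab])
      finally show ?thesis using \<kappa>(1) by (simp add: field_simps)
    qed
    have F2: "integral {\<alpha>..\<beta>} (\<lambda>t. e k t \<bullet> e k t) \<le> 1 / \<kappa> * J"
      if k: "k \<in> {1..n}" "g k = 1" and ab: "t0 \<le> \<alpha>" "\<beta> \<le> t0 + L" for k \<alpha> \<beta>
    proof -
      have pw: "\<kappa> * (e k t \<bullet> e k t) \<le> W e t" for t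
      proof -
        have "\<kappa> * (e k t \<bullet> e k t) \<le> g k * Q (K 0 k) (e k t)" using \<kappa>(3)[OF k] k by simp
        also have "\<dots> \<le> (\<Sum>i\<in>{1..n}. g i * Q (K 0 i) (e i t))"
          using k by (intro member_le_sum Q0_nonneg) auto
        also have "\<dots> \<le> W e t"
        proof -
          have "0 \<le> (\<Sum>i\<in>{1..n}. \<Sum>j\<in>N i. Q (K j i) (e i t - e j (t - T j i)) / 2)"
            by (intro sum_nonneg divide_nonneg_pos Qe_nonneg) auto
          thus ?thesis unfolding W_def by linarith
        qed
        finally show ?thesis .
      qed
      have "integral {\<alpha>..\<beta>} (\<lambda>t. \<kappa> * (e k t \<bullet> e k t)) \<le> integral {\<alpha>..\<beta>} (W e)"
        using ab by (intro integral_le wint pw integrable_continuous_real continuous_intros c_sq k) auto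
      also have "\<dots> \<le> J" by (rule Wsub[OF ab])
      finally show ?thesis using \<kappa>(1) by (simp add: field_simps)
    qed
    define known where "known r k \<longleftrightarrow>
       integral {t0 + real r * h..t0 + L - real r * h} (\<lambda>t. e k t \<bullet> e k t) \<le> B r * J" for r k
    have sq_nn: "0 \<le> e k t \<bullet> e k t" for k t by simp
    have kmono: "known (Suc r) k" if "known r k" "k \<in> {1..n}" for r k
    proof -
      have "integral {t0 + real (Suc r) * h..t0 + L - real (Suc r) * h} (\<lambda>t. e k t \<bullet> e k t)
         \<le> integral {t0 + real r * h..t0 + L - real r * h} (\<lambda>t. e k t \<bullet> e k t)"
        using h by (intro int_sub c_sq that(2)) (auto simp: algebra_simps)
      also have "\<dots> \<le> B r * J" using that known_def by auto
      also have "\<dots> \<le> B (Suc r) * J" using Bmono J by (intro mult_right_mono) auto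
      finally show ?thesis unfolding known_def .
    qed
    have kbase: "known r k" if "k \<in> {1..n}" "g k = 1" for r k
    proof -
      have "integral {t0 + real r * h..t0 + L - real r * h} (\<lambda>t. e k t \<bullet> e k t) \<le> 1 / \<kappa> * J"
        using h by (intro F2 that) auto
      also have "\<dots> \<le> B r * J"
      proof (rule mult_right_mono[OF _ J])
        have "1 / \<kappa> \<le> 4 / \<kappa>" using \<kappa> by (simp add: divide_right_mono)
        also have "\<dots> \<le> B r"
        proof -
          have "4 / \<kappa> * 1 \<le> 4 / \<kappa> * 3 ^ r" using \<kappa> by (intro mult_left_mono) auto
          thus ?thesis by (simp add: B_def)
        qed
        finally show "1 / \<kappa> \<le> B r" .
      qed
      finally show ?thesis unfolding known_def .
    qed
    have step1: "known (Suc r) j" if i: "i \<in> {1..n}" and j: "j \<in> N i" and kn: "known r i" for r i j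
    proof -
      define \<alpha> where "\<alpha> = t0 + real r * h"
      define \<beta> where "\<beta> = t0 + L - real r * h"
      have jn: "j \<in> {1..n}" using N_mem i j by blast
      have T: "0 \<le> T j i" "T j i \<le> h" using Tnn[OF i j] h(2)[OF i j] by auto
      have rh: "0 \<le> real r * h" using h by simp
      have ab: "t0 \<le> \<alpha>" "\<beta> \<le> t0 + L" unfolding \<alpha>_def \<beta>_def using h rh by linarith+
      have "integral {\<alpha> + h..\<beta> - h} (\<lambda>t. e j t \<bullet> e j t) \<le> integral {\<alpha> - T j i..\<beta> - T j i} (\<lambda>t. e j t \<bullet> e j t)"
        using T h by (intro int_sub c_sq jn) auto
      also have "\<dots> = integral {\<alpha>..\<beta>} (\<lambda>t. e j (t - T j i) \<bullet> e j (t - T j i))"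
        by (rule int_shift[symmetric])
      also have "\<dots> \<le> integral {\<alpha>..\<beta>} (\<lambda>t. 2 * (e i t \<bullet> e i t)
            + 2 * ((e i t - e j (t - T j i)) \<bullet> (e i t - e j (t - T j i))))"
        by (intro integral_le integrable_continuous_real continuous_intros c_sq c_sqd c_sq_shift i jn sq_tri)
      also have "\<dots> = 2 * integral {\<alpha>..\<beta>} (\<lambda>t. e i t \<bullet> e i t)
            + 2 * integral {\<alpha>..\<beta>} (\<lambda>t. (e i t - e j (t - T j i)) \<bullet> (e i t - e j (t - T j i)))"
        by (subst integral_add) (auto intro!: integrable_continuous_real continuous_intros c_sq c_sqd i jn)
      also have "\<dots> \<le> 2 * (B r * J) + 2 * (2 / \<kappa> * J)"
        using kn F1[OF i j ab] by (intro add_mono) (auto simp: known_def \<alpha>_def \<beta>_def)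
      also have "\<dots> = (2 * B r + 4 / \<kappa>) * J" by (simp add: algebra_simps)
      also have "\<dots> \<le> B (Suc r) * J" by (rule mult_right_mono[OF Bstep J])
      finally show ?thesis unfolding known_def \<alpha>_def \<beta>_def by (simp add: algebra_simps)
    qed
    have step2: "known (Suc r) i" if i: "i \<in> {1..n}" and j: "j \<in> N i" and kn: "known r j" for r i j
    proof -
      define \<alpha> where "\<alpha> = t0 + real r * h"
      define \<beta> where "\<beta> = t0 + L - real r * h"
      have jn: "j \<in> {1..n}" using N_mem i j by blast
      have T: "0 \<le> T j i" "T j i \<le> h" using Tnn[OF i j] h(2)[OF i j] by auto
      have rh: "0 \<le> real r * h" using h by simp
      have ab: "t0 \<le> \<alpha> + h" "\<beta> - h \<le> t0 + L" unfolding \<alpha>_def \<beta>_def using h rh by linarith+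
      have "integral {\<alpha> + h..\<beta> - h} (\<lambda>t. e i t \<bullet> e i t) \<le> integral {\<alpha> + h..\<beta> - h} (\<lambda>t. 2 * (e j (t - T j i) \<bullet> e j (t - T j i))
            + 2 * ((e i t - e j (t - T j i)) \<bullet> (e i t - e j (t - T j i))))"
        by (intro integral_le integrable_continuous_real continuous_intros c_sq c_sqd c_sq_shift i jn sq_tri2)
      also have "\<dots> = 2 * integral {\<alpha> + h..\<beta> - h} (\<lambda>t. e j (t - T j i) \<bullet> e j (t - T j i))
            + 2 * integral {\<alpha> + h..\<beta> - h} (\<lambda>t. (e i t - e j (t - T j i)) \<bullet> (e i t - e j (t - T j i)))"
        by (subst integral_add) (auto intro!: integrable_continuous_real continuous_intros c_sq_shift c_sqd i jn)
      also have "integral {\<alpha> + h..\<beta> - h} (\<lambda>t. e j (t - T j i) \<bullet> e j (t - T j i))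
          = integral {\<alpha> + h - T j i..\<beta> - h - T j i} (\<lambda>t. e j t \<bullet> e j t)"
        by (rule int_shift)
      also have "\<dots> \<le> integral {\<alpha>..\<beta>} (\<lambda>t. e j t \<bullet> e j t)"
        using T h by (intro int_sub c_sq jn) auto
      also have "\<dots> \<le> B r * J" using kn by (simp add: known_def \<alpha>_def \<beta>_def)
      finally have "integral {\<alpha> + h..\<beta> - h} (\<lambda>t. e i t \<bullet> e i t) \<le> 2 * (B r * J) + 2 * (2 / \<kappa> * J)"
        using F1[OF i j ab] by simp
      also have "\<dots> = (2 * B r + 4 / \<kappa>) * J" by (simp add: algebra_simps)
      also have "\<dots> \<le> B (Suc r) * J" by (rule mult_right_mono[OF Bstep J])
      finally show ?thesis unfolding known_def \<alpha>_def \<beta>_def by (simp add: algebra_simps)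
    qed
    have reach_known: "k \<in> {1..n} \<and> known r k" if "k \<in> reach r" "k \<noteq> 0" for r k
      using that
    proof (induction r arbitrary: k)
      case 0 thus ?case by simp
    next
      case (Suc r)
      show ?case
      proof (cases "k \<in> reach r")
        case True
        have "k \<in> {1..n} \<and> known r k" by (rule Suc.IH[OF True Suc.prems(2)])
        thus ?thesis using kmono[of r k] by simp
      next
        case False
        then obtain a where a: "a \<in> reach r" "(a, k) \<in> UE" using Suc.prems(1) by auto
        show ?thesis
        proof (cases "(a, k) \<in> net_edges n N g")
          case True
          hence "(k \<in> {1..n} \<and> a \<in> N k) \<or> (a = 0 \<and> k \<in> {1..n} \<and> g k = 1)"
            by (auto simp: net_edges_def)
          thus ?thesis
          proof
            assume ak: "k \<in> {1..n} \<and> a \<in> N k"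
            hence "a \<in> {1..n}" using N_mem[of k a] by simp
            hence "a \<noteq> 0" by simp
            hence "a \<in> {1..n} \<and> known r a" by (rule Suc.IH[OF a(1)])
            hence "known (Suc r) k" using step2[of k a r] ak by simp
            thus ?thesis using ak by simp
          next
            assume l: "a = 0 \<and> k \<in> {1..n} \<and> g k = 1"
            hence "known (Suc r) k" using kbase[of k "Suc r"] by simp
            thus ?thesis using l by simp
          qed
        next
          case False
          hence "(k, a) \<in> net_edges n N g" using a(2) by (auto simp: UE_def)
          hence ka: "a \<in> {1..n} \<and> k \<in> N a" using Suc.prems(2) by (auto simp: net_edges_def)
          hence "a \<noteq> 0" by simp
          hence "a \<in> {1..n} \<and> known r a" by (rule Suc.IH[OF a(1)])
          hence "known (Suc r) k" using step1[of a k r] ka by simp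
          moreover have "k \<in> {1..n}" using N_mem[of a k] ka by simp
          ultimately show ?thesis by simp
        qed
      qed
    qed
    have allk: "known R k" if "k \<in> {1..n}" for k
    proof -
      have "k \<in> reach R" using R that by blast
      moreover have "k \<noteq> 0" using that by simp
      ultimately show ?thesis using reach_known by blast
    qed
    define a where "a = t0 + real R * h"
    have winR: "t0 + real R * h = a" "t0 + L - real R * h = a + h + 1"
      by (auto simp: a_def L_def algebra_simps)
    have Ik: "integral {a..a + h + 1} (\<lambda>t. e k t \<bullet> e k t) \<le> B R * J" if "k \<in> {1..n}" for k
      using allk[OF that] unfolding known_def winR .
    define S where "S t = (\<Sum>k\<in>{1..n}. e k t \<bullet> e k t)" for t
    have cS: "continuous_on U S" for U unfolding S_def[abs_def] by (intro continuous_intros c_sq) auto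
    obtain ts where ts: "ts \<in> {a + h..a + h + 1}" "\<And>y. y \<in> {a + h..a + h + 1} \<Longrightarrow> S ts \<le> S y"
      using continuous_attains_inf[OF compact_Icc _ cS, of "a + h" "a + h + 1"] by auto
    have "S ts = integral {a + h..a + h + 1} (\<lambda>t. S ts)" by simp
    also have "\<dots> \<le> integral {a + h..a + h + 1} S"
      using ts by (intro integral_le integrable_continuous_real cS) auto
    also have "\<dots> \<le> integral {a..a + h + 1} S"
      using h by (intro int_sub cS) (auto simp: S_def sum_nonneg)
    also have "\<dots> = (\<Sum>k\<in>{1..n}. integral {a..a + h + 1} (\<lambda>t. e k t \<bullet> e k t))"
      unfolding S_def by (rule integral_sum) (auto intro!: integrable_continuous_real c_sq)
    also have "\<dots> \<le> (\<Sum>k\<in>{1..n}. B R * J)" by (intro sum_mono Ik) auto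
    finally have Sts: "S ts \<le> real n * B R * J" by simp
    have Vts: "V e ts \<le> D * J"
    proof -
      have "(\<Sum>i\<in>{1..n}. e i ts \<bullet> e i ts / 2) = S ts / 2" by (simp add: S_def sum_divide_distrib)
      moreover have "integral {ts - T j i..ts} (\<lambda>s. Q (K j i) (e j s)) / 2 \<le> \<Lambda> * B R / 2 * J"
        if i: "i \<in> {1..n}" and j: "j \<in> N i" for i j
      proof -
        have jn: "j \<in> {1..n}" using N_mem i j by blast
        have T: "0 \<le> T j i" "T j i \<le> h" using Tnn[OF i j] h(2)[OF i j] by auto
        have "integral {ts - T j i..ts} (\<lambda>s. Q (K j i) (e j s)) \<le> integral {ts - T j i..ts} (\<lambda>s. \<Lambda> * (e j s \<bullet> e j s))"
          by (intro integral_le integrable_continuous_real cont_Qc hsol_cont[OF e] jn continuous_intros c_sq \<Lambda>(2) i j)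
        also have "\<dots> = \<Lambda> * integral {ts - T j i..ts} (\<lambda>s. e j s \<bullet> e j s)" by simp
        also have "\<dots> \<le> \<Lambda> * integral {a..a + h + 1} (\<lambda>s. e j s \<bullet> e j s)"
          using ts T \<Lambda>(1) by (intro mult_left_mono int_sub c_sq jn) auto
        also have "\<dots> \<le> \<Lambda> * (B R * J)" using Ik[OF jn] \<Lambda>(1) by (intro mult_left_mono) auto
        finally show ?thesis by simp
      qed
      hence "(\<Sum>i\<in>{1..n}. \<Sum>j\<in>N i. integral {ts - T j i..ts} (\<lambda>s. Q (K j i) (e j s)) / 2)
            \<le> (\<Sum>i\<in>{1..n}. \<Sum>j\<in>N i. \<Lambda> * B R / 2 * J)" by (intro sum_mono) auto
      ultimately have "V e ts \<le> S ts / 2 + (\<Sum>i\<in>{1..n}. \<Sum>j\<in>N i. \<Lambda> * B R / 2 * J)"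
        unfolding V_def by linarith
      also have "\<dots> \<le> real n * B R * J / 2 + (\<Sum>i\<in>{1..n}. \<Sum>j\<in>N i. \<Lambda> * B R / 2) * J"
      proof -
        have "S ts / 2 \<le> real n * B R * J / 2" using Sts by simp
        moreover have "(\<Sum>i\<in>{1..n}. \<Sum>j\<in>N i. \<Lambda> * B R / 2 * J) = (\<Sum>i\<in>{1..n}. \<Sum>j\<in>N i. \<Lambda> * B R / 2) * J"
          by (simp add: sum_distrib_right mult.assoc)
        ultimately show ?thesis by linarith
      qed
      also have "\<dots> = D * J" by (simp add: D_def algebra_simps)
      finally show ?thesis .
    qed
    have "V e (t0 + L) \<le> V e ts"
    proof (rule V_mono[OF e])
      have rh: "0 \<le> real R * h" "real R * h \<le> 2 * real R * h" using h by auto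
      have tsb: "a + h \<le> ts" "ts \<le> a + h + 1" using ts(1) by auto
      show "0 \<le> ts" using tsb h t0 rh a_def by linarith
      show "ts \<le> t0 + L" using tsb rh a_def L_def by linarith
    qed
    also have "\<dots> \<le> D * J" by (rule Vts)
    also have "\<dots> \<le> (D + 1) * J" using J by (simp add: algebra_simps)
    finally have "V e (t0 + L) \<le> (D + 1) * (V e t0 - V e (t0 + L))" by (simp add: J_def)
    hence "(D + 2) * V e (t0 + L) \<le> (D + 1) * V e t0" by (simp add: algebra_simps)
    thus ?thesis using D by (simp add: \<theta>_def field_simps)
  qed
  show ?thesis using \<theta> L main by blast
qed

lemma exp_bound: "\<exists>C \<rho>. 0 < \<rho> \<and> \<rho> < 1 \<and> (\<forall>t\<ge>0. \<forall>i\<in>{1..n}. norm (e i t) \<le> C * \<rho> powr t)"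
proof -
  obtain \<theta> L where \<theta>L: "0 < \<theta>" "\<theta> < 1" "L > 0" "\<And>t0. t0 \<ge> 0 \<Longrightarrow> V e (t0 + L) \<le> \<theta> * V e t0"
    using decay by blast
  have Vk: "V e (real k * L) \<le> \<theta> ^ k * V e 0" for k
  proof (induction k)
    case 0 thus ?case by simp
  next
    case (Suc k)
    have "V e (real (Suc k) * L) = V e (real k * L + L)" by (simp add: distrib_right add.commute)
    also have "\<dots> \<le> \<theta> * V e (real k * L)" using \<theta>L by (intro \<theta>L(4)) simp
    also have "\<dots> \<le> \<theta> * (\<theta> ^ k * V e 0)" using Suc \<theta>L(1) by (intro mult_left_mono) auto
    finally show ?case by simp
  qed
  define \<sigma> where "\<sigma> = \<theta> powr (1 / L)"
  have \<sigma>: "0 < \<sigma>" "\<sigma> < 1" using \<theta>L by (auto simp: \<sigma>_def powr01_less_one)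
  have Vt: "V e t \<le> V e 0 / \<theta> * \<sigma> powr t" if t: "t \<ge> 0" for t
  proof -
    define k where "k = nat (floor (t / L))"
    have k1: "real k \<le> t / L" using t \<theta>L(3) by (simp add: k_def)
    have k2: "t / L - 1 \<le> real k" using t \<theta>L(3) unfolding k_def by linarith
    have kL: "real k * L \<le> t" using k1 \<theta>L(3) by (simp add: field_simps)
    have "V e t \<le> V e (real k * L)" using kL \<theta>L(3) by (intro V_mono[OF e]) auto
    also have "\<dots> \<le> \<theta> ^ k * V e 0" by (rule Vk)
    also have "\<theta> ^ k = \<theta> powr real k" using \<theta>L(1) by (simp add: powr_realpow)
    also have "\<dots> \<le> \<theta> powr (t / L - 1)" using k2 \<theta>L by (intro powr_mono') auto
    also have "\<theta> powr (t / L - 1) = \<sigma> powr t / \<theta>"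
      using \<theta>L(1) by (simp add: powr_diff \<sigma>_def powr_powr)
    finally have "V e t \<le> \<sigma> powr t / \<theta> * V e 0"
      using V_nonneg by (simp add: mult_right_mono)
    thus ?thesis by (simp add: field_simps)
  qed
  define \<rho> where "\<rho> = sqrt \<sigma>"
  have \<rho>: "0 < \<rho>" "\<rho> < 1" using \<sigma> by (auto simp: \<rho>_def)
  define C where "C = sqrt (2 * V e 0 / \<theta>)"
  have "norm (e i t) \<le> C * \<rho> powr t" if t: "t \<ge> 0" and i: "i \<in> {1..n}" for t i
  proof -
    have "e i t \<bullet> e i t \<le> 2 * V e t" using V_lower[OF e i, of t] by simp
    also have "\<dots> \<le> 2 * V e 0 / \<theta> * \<sigma> powr t" using Vt[OF t] by simp
    finally have "norm (e i t) \<le> sqrt (2 * V e 0 / \<theta> * \<sigma> powr t)"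
      by (simp add: norm_eq_sqrt_inner real_sqrt_le_mono)
    also have "\<dots> = C * sqrt (\<sigma> powr t)" unfolding C_def by (rule real_sqrt_mult)
    also have "sqrt (\<sigma> powr t) = \<rho> powr t"
    proof -
      have "sqrt (\<sigma> powr t) = (\<sigma> powr t) powr (1/2)" by (simp add: powr_half_sqrt)
      also have "\<dots> = (\<sigma> powr (1/2)) powr t" by (simp add: powr_powr mult.commute)
      also have "\<dots> = \<rho> powr t" using \<sigma> by (simp add: powr_half_sqrt \<rho>_def)
      finally show ?thesis .
    qed
    finally show ?thesis .
  qed
  thus ?thesis using \<rho> by blast
qed

end

lemma rhs_diff:
  "follower_rhs N K T g x0 x i t - follower_rhs N K T g x0 y i t = hrhs (\<lambda>i t. x i t - y i t) i t"
proof -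
  have pw: "A *v (a - c) - A *v (b - d) = A *v ((a - b) - (c - d))" for A :: "real^'m^'m" and a b c d :: "real^'m"
    by (simp add: matrix_vector_mult_diff_distrib algebra_simps)
  have s: "(\<Sum>j\<in>N i. K j i *v (x j (t - T j i) - x i t)) - (\<Sum>j\<in>N i. K j i *v (y j (t - T j i) - y i t))
     = (\<Sum>j\<in>N i. K j i *v ((x j (t - T j i) - y j (t - T j i)) - (x i t - y i t)))"
    by (simp only: sum_subtractf[symmetric] pw)
  have l: "g i *\<^sub>R (K 0 i *v (x0 (t - T 0 i) - x i t)) - g i *\<^sub>R (K 0 i *v (x0 (t - T 0 i) - y i t))
     = - (g i *\<^sub>R (K 0 i *v (x i t - y i t)))"
    by (simp add: matrix_vector_mult_diff_distrib algebra_simps)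
  show ?thesis unfolding follower_rhs_def hrhs_def using s l by (simp add: algebra_simps)
qed

lemma sol_diff:
  assumes x: "follower_solution n N K T g x0 x" and y: "follower_solution n N K T g x0 y"
  shows "hsol (\<lambda>i t. x i t - y i t)"
  unfolding hsol_def
proof (intro ballI conjI allI impI)
  fix i assume i: "i \<in> {1..n}"
  show "continuous_on UNIV (\<lambda>t. x i t - y i t)"
    using x y i by (intro continuous_on_diff) (auto simp: follower_solution_def)
  fix t :: real assume t: "t > 0"
  have "((\<lambda>t. x i t - y i t) has_vector_derivative
      follower_rhs N K T g x0 x i t - follower_rhs N K T g x0 y i t) (at t)"
    using x y i t by (intro has_vector_derivative_diff) (auto simp: follower_solution_def)
  thus "((\<lambda>t. x i t - y i t) has_vector_derivative hrhs (\<lambda>i t. x i t - y i t) i t) (at t)"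
    by (simp only: rhs_diff)
qed

lemma periodic_limit:
  assumes P: "P > 0" and per: "\<forall>t. x0 (t + P) = x0 t"
    and x: "follower_solution n N K T g x0 x" and i: "i \<in> {1..n}"
  shows "\<exists>p :: real \<Rightarrow> real^'m. (\<forall>t. p (t + P) = p t) \<and> ((\<lambda>t. x i t - p t) \<longlongrightarrow> 0) at_top"
proof -
  define y where "y k t = x k (t + P)" for k t
  have x0P: "x0 (t + P - c) = x0 (t - c)" for t c
  proof -
    have e1: "t + P - c = (t - c) + P" by simp
    have "x0 ((t - c) + P) = x0 (t - c)" using per by blast
    thus ?thesis by (simp only: e1)
  qed
  have ysol: "follower_solution n N K T g x0 y"
    unfolding follower_solution_def
  proof (intro ballI conjI allI impI)
    fix k assume k: "k \<in> {1..n}"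
    have cx: "continuous_on UNIV (x k)" using x k by (auto simp: follower_solution_def)
    show "continuous_on UNIV (y k)" unfolding y_def
      by (rule continuous_on_compose2[OF cx]) (auto intro!: continuous_intros)
    fix t :: real assume t: "t > 0"
    have dx: "(x k has_vector_derivative follower_rhs N K T g x0 x k (t + P)) (at (t + P))"
      using x k t P by (auto simp: follower_solution_def)
    have ds: "((\<lambda>s. s + P) has_vector_derivative 1) (at t)"
      by (auto intro!: derivative_eq_intros)
    have d1: "(x k \<circ> (\<lambda>s. s + P) has_vector_derivative 1 *\<^sub>R follower_rhs N K T g x0 x k (t + P)) (at t)"
      using vector_diff_chain_at[OF ds] dx by simp
    have eq1: "follower_rhs N K T g x0 x k (t + P) = follower_rhs N K T g x0 y k t"
      by (simp only: follower_rhs_def y_def x0P) (simp add: algebra_simps)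
    have yk: "y k = x k \<circ> (\<lambda>s. s + P)" by (simp add: y_def fun_eq_iff)
    show "(y k has_vector_derivative follower_rhs N K T g x0 y k t) (at t)"
      using d1 unfolding yk eq1 by simp
  qed
  have h: "hsol (\<lambda>i t. y i t - x i t)" by (rule sol_diff[OF ysol x])
  obtain C \<rho> where C\<rho>: "0 < \<rho>" "\<rho> < 1"
    "\<And>t k. t \<ge> 0 \<Longrightarrow> k \<in> {1..n} \<Longrightarrow> norm (y k t - x k t) \<le> C * \<rho> powr t"
    using exp_bound[OF h] by blast
  define d where "d s = x i (s + P) - x i s" for s
  have dbound: "norm (d s) \<le> C * \<rho> powr s" if "s \<ge> 0" for s
    using C\<rho>(3)[OF that i] by (simp add: d_def y_def)
  define q where "q = \<rho> powr P"
  have q: "0 < q" "q < 1" using C\<rho> P by (auto simp: q_def powr01_less_one)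
  have rpow: "\<rho> powr (t + real k * P) = \<rho> powr t * q ^ k" for t k
  proof -
    have "\<rho> powr (real k * P) = (\<rho> powr P) powr real k" by (simp add: powr_powr mult.commute)
    also have "\<dots> = q ^ k" using q by (simp add: q_def powr_realpow)
    finally show ?thesis by (simp add: powr_add)
  qed
  have gsum: "summable (\<lambda>k. c * q ^ k)" for c using q by (intro summable_mult summable_geometric) auto
  have summ: "summable (\<lambda>k. d (t + real k * P))" for t
  proof -
    obtain k0 :: nat where k0: "- t < real k0 * P" using ex_less_of_nat_mult[OF P, of "- t"] by auto
    show ?thesis
    proof (rule summable_comparison_test'[OF gsum[of "C * \<rho> powr t"], of k0])
      fix k assume "k0 \<le> k"
      hence "real k0 * P \<le> real k * P" using P by (intro mult_right_mono) auto
      hence "t + real k * P \<ge> 0" using k0 by linarith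
      hence "norm (d (t + real k * P)) \<le> C * \<rho> powr (t + real k * P)" by (rule dbound)
      thus "norm (d (t + real k * P)) \<le> C * \<rho> powr t * q ^ k" by (simp add: rpow)
    qed
  qed
  define p where "p t = x i t + (\<Sum>k. d (t + real k * P))" for t
  have "p (t + P) = p t" for t
  proof -
    have "(\<Sum>k. d (t + P + real k * P)) = (\<Sum>k. d (t + real (Suc k) * P))" by (simp add: algebra_simps)
    also have "\<dots> = (\<Sum>k. d (t + real k * P)) - d t" using suminf_split_head[OF summ[of t]] by simp
    finally show ?thesis by (simp add: p_def d_def)
  qed
  moreover have "((\<lambda>t. x i t - p t) \<longlongrightarrow> 0) at_top"
  proof (rule Lim_null_comparison)
    show "\<forall>\<^sub>F t in at_top. norm (x i t - p t) \<le> C / (1 - q) * \<rho> powr t"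
    proof (rule eventually_at_top_linorder[THEN iffD2], intro exI[of _ 0] allI impI)
      fix t :: real assume t: "t \<ge> 0"
      have "norm (x i t - p t) = norm (\<Sum>k. d (t + real k * P))" by (simp add: p_def)
      also have "\<dots> \<le> (\<Sum>k. C * \<rho> powr t * q ^ k)"
      proof (rule norm_suminf_le[OF _ gsum])
        fix k
        have "0 \<le> real k * P" using P by simp
        hence "norm (d (t + real k * P)) \<le> C * \<rho> powr (t + real k * P)" using t by (intro dbound) simp
        thus "norm (d (t + real k * P)) \<le> C * \<rho> powr t * q ^ k" by (simp add: rpow)
      qed
      also have "\<dots> = C * \<rho> powr t * (1 / (1 - q))"
        using q by (simp add: suminf_mult summable_geometric suminf_geometric)
      finally show "norm (x i t - p t) \<le> C / (1 - q) * \<rho> powr t" by simp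
    qed
    show "((\<lambda>t. C / (1 - q) * \<rho> powr t) \<longlongrightarrow> 0) at_top" by (rule powr_tendsto0[OF C\<rho>(1,2)])
  qed
  ultimately show ?thesis by blast
qed

lemma converge:
  assumes x: "follower_solution n N K T g x0 x" and y: "follower_solution n N K T g x0 y"
    and i: "i \<in> {1..n}"
  shows "((\<lambda>t. x i t - y i t) \<longlongrightarrow> 0) at_top"
proof -
  obtain C \<rho> where C\<rho>: "0 < \<rho>" "\<rho> < 1"
    "\<And>t k. t \<ge> 0 \<Longrightarrow> k \<in> {1..n} \<Longrightarrow> norm (x k t - y k t) \<le> C * \<rho> powr t"
    using exp_bound[OF sol_diff[OF x y]] by blast
  show ?thesis
  proof (rule Lim_null_comparison)
    show "\<forall>\<^sub>F t in at_top. norm (x i t - y i t) \<le> C * \<rho> powr t"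
      using C\<rho>(3)[OF _ i] by (intro eventually_at_top_linorder[THEN iffD2]) auto
    show "((\<lambda>t. C * \<rho> powr t) \<longlongrightarrow> 0) at_top" by (rule powr_tendsto0[OF C\<rho>(1,2)])
  qed
qed

end

theorem mainTheorem5:
  fixes n :: nat
    and N :: "nat \<Rightarrow> nat set"
    and K :: "nat \<Rightarrow> nat \<Rightarrow> real^'m^'m"
    and T :: "nat \<Rightarrow> nat \<Rightarrow> real"
    and g :: "nat \<Rightarrow> real"
    and x0 :: "real \<Rightarrow> real^'m"
  assumes "n \<ge> 1"
    and x0_cont: "continuous_on UNIV x0"
    and x0_bdd: "bounded (range x0)"
    and N_sub: "\<forall>i\<in>{1..n}. N i \<subseteq> {1..n} - {i}"
    and K_pd: "\<forall>i\<in>{1..n}. \<forall>j\<in>N i. sym_pos_def_mat (K j i)"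
    and K0_pd: "\<forall>i\<in>{1..n}. g i = 1 \<longrightarrow> sym_pos_def_mat (K 0 i)"
    and g01: "\<forall>i\<in>{1..n}. g i \<in> {0, 1}"
    and g_some: "\<exists>i\<in>{1..n}. g i = 1"
    and T_nonneg: "\<forall>i\<in>{1..n}. (\<forall>j\<in>N i. T j i \<ge> 0) \<and> T 0 i \<ge> 0"
    and conn: "net_connected n N g"
    and links: "links_ok n N K"
  shows "(\<forall>x y. follower_solution n N K T g x0 x \<and> follower_solution n N K T g x0 y \<longrightarrow>
            (\<forall>i\<in>{1..n}. ((\<lambda>t. x i t - y i t) \<longlongrightarrow> 0) at_top))
       \<and> (\<forall>P>0. (\<forall>t. x0 (t + P) = x0 t) \<longrightarrow>
            (\<forall>x. follower_solution n N K T g x0 x \<longrightarrow>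
               (\<forall>i\<in>{1..n}. \<exists>p :: real \<Rightarrow> real^'m. (\<forall>t. p (t + P) = p t) \<and>
                    ((\<lambda>t. x i t - p t) \<longlongrightarrow> 0) at_top)))"
proof -
  interpret netw n N K T g
    by (rule netw.intro) (fact N_sub K_pd K0_pd g01 T_nonneg conn links)+
  show ?thesis using converge periodic_limit by blast
qed

end
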